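(* Let $G$ be a $\sigma$-compact locally compact Abelian group and $\omega=\sum_{x\in\Gamma}\omega(x)\delta_x$ a concentrated weighted comb with $\|\omega\|_\infty<\infty$. Then $\omega$ is norm-almost periodic if and only if $\omega$ is sup-almost periodic.
   Context: $\|\omega\|_\infty:=\sup_x|\omega(\{x\})|$. Fix a compact $K\subset G$ with nonempty interior and set $\|\mu\|_K:=\sup_{t\in G}|\mu|(t+K)$; $T_t\mu(A)=\mu(A-t)$. A weighted comb $\omega$ is concentrated if for every $\varepsilon>0$ there is a set $\Lambda\subset G$ with finite local complexity ($\Lambda-\Lambda$ locally finite) such that $\|\omega-\omega|_\Lambda\|_K<\varepsilon$, where $\omega|_\Lambda=\sum_{x\in\Gamma\cap\Lambda}\omega(x)\delta_x$. Norm-almost periodic: $\{t:\|\omega-T_t\omega\|_K<\varepsilon\}$ relatively dense for all $\varepsilon>0$; sup-almost periodic: $\{t:\sup_x|\omega(\{t+x\})-\omega(\{x\})|<\varepsilon\}$ relatively dense for all $\varepsilon>0$. *)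

theory Defs
  imports "HOL-Analysis.Analysis"
begin

text \<open>A weighted comb \<open>\<omega> = \<Sum>x\<in>\<Gamma>. \<omega>(x) \<delta>\<^sub>x\<close> is represented by its weight
  function \<open>w\<close> (with \<open>w x = \<omega>({x})\<close>, zero off \<open>\<Gamma>\<close>).\<close>

definition var_mass :: "('a \<Rightarrow> complex) \<Rightarrow> 'a set \<Rightarrow> ennreal" where
  "var_mass w A = (\<Sum>\<^sub>\<infinity>x\<in>A. ennreal (cmod (w x)))"

text \<open>The comb defines a (Radon) measure: finite total variation on compacts.\<close>
definition weighted_comb :: "('a::topological_space \<Rightarrow> complex) \<Rightarrow> bool" where
  "weighted_comb w \<longleftrightarrow> (\<forall>C. compact C \<longrightarrow> var_mass w C < \<infinity>)"

definition K_norm :: "'a::ab_group_add set \<Rightarrow> ('a \<Rightarrow> complex) \<Rightarrow> ennreal" where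
  "K_norm K w = (SUP t. var_mass w ((+) t ` K))"

definition sup_norm :: "('a \<Rightarrow> complex) \<Rightarrow> ennreal" where
  "sup_norm w = (SUP x. ennreal (cmod (w x)))"

text \<open>Translate: \<open>T\<^sub>t\<omega>(A) = \<omega>(A - t)\<close>, so \<open>(T\<^sub>t\<omega>)({x}) = \<omega>({x - t})\<close>.\<close>
definition transl :: "'a::ab_group_add \<Rightarrow> ('a \<Rightarrow> complex) \<Rightarrow> ('a \<Rightarrow> complex)" where
  "transl t w = (\<lambda>x. w (x - t))"

definition comb_restrict :: "('a \<Rightarrow> complex) \<Rightarrow> 'a set \<Rightarrow> ('a \<Rightarrow> complex)" where
  "comb_restrict w \<Lambda> = (\<lambda>x. if x \<in> \<Lambda> then w x else 0)"

definition locally_finite_set :: "'a::topological_space set \<Rightarrow> bool" where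
  "locally_finite_set S \<longleftrightarrow> (\<forall>C. compact C \<longrightarrow> finite (S \<inter> C))"

definition FLC :: "'a::{topological_space, ab_group_add} set \<Rightarrow> bool" where
  "FLC \<Lambda> \<longleftrightarrow> locally_finite_set {x - y | x y. x \<in> \<Lambda> \<and> y \<in> \<Lambda>}"

definition rel_dense :: "'a::{topological_space, ab_group_add} set \<Rightarrow> bool" where
  "rel_dense S \<longleftrightarrow> (\<exists>C. compact C \<and> (\<forall>g. \<exists>s\<in>S. \<exists>c\<in>C. g = s + c))"

definition concentrated ::
  "'a::{topological_space, ab_group_add} set \<Rightarrow> ('a \<Rightarrow> complex) \<Rightarrow> bool" where
  "concentrated K w \<longleftrightarrow> (\<forall>\<epsilon>>0. \<exists>\<Lambda>. FLC \<Lambda> \<and>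
      K_norm K (\<lambda>x. w x - comb_restrict w \<Lambda> x) < ennreal \<epsilon>)"

definition norm_ap ::
  "'a::{topological_space, ab_group_add} set \<Rightarrow> ('a \<Rightarrow> complex) \<Rightarrow> bool" where
  "norm_ap K w \<longleftrightarrow> (\<forall>\<epsilon>>0. rel_dense
      {t. K_norm K (\<lambda>x. w x - transl t w x) < ennreal \<epsilon>})"

definition sup_ap :: "('a::{topological_space, ab_group_add} \<Rightarrow> complex) \<Rightarrow> bool" where
  "sup_ap w \<longleftrightarrow> (\<forall>\<epsilon>>0. rel_dense
      {t. (SUP x. ennreal (cmod (w (t + x) - w x))) < ennreal \<epsilon>})"

definition sigma_compact_space :: "'a::topological_space itself \<Rightarrow> bool" where
  "sigma_compact_space _ \<longleftrightarrow> (\<exists>F::nat \<Rightarrow> 'a set. (\<forall>n. compact (F n)) \<and> (\<Union>n. F n) = UNIV)"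

end

theory Submission
  imports Defs
begin

lemma ennreal_summ: "(f::'b \<Rightarrow> ennreal) summable_on A"
  by (rule nonneg_summable_on_complete) simp

lemma var_mass_single:
  assumes "x \<in> A" shows "ennreal (cmod (w x)) \<le> var_mass w A"
proof -
  have "infsum (\<lambda>x. ennreal (cmod (w x))) {x} \<le> infsum (\<lambda>x. ennreal (cmod (w x))) A"
    by (rule infsum_mono_neutral[OF ennreal_summ ennreal_summ]) (use assms in auto)
  then show ?thesis by (simp add: var_mass_def)
qed

lemma var_mass_le_K: "var_mass w ((+) s ` K) \<le> K_norm K w"
  unfolding K_norm_def by (rule SUP_upper) simp

lemma rel_dense_mono: "S \<subseteq> T \<Longrightarrow> rel_dense S \<Longrightarrow> rel_dense T"
  unfolding rel_dense_def by (metis subsetD)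

lemma card_bound:
  fixes K :: "'a::{topological_ab_group_add, t2_space} set"
  assumes "FLC \<Lambda>" "compact K"
  shows "finite (\<Lambda> \<inter> (+) s ` K) \<and>
     card (\<Lambda> \<inter> (+) s ` K) \<le> card ({x - y | x y. x \<in> \<Lambda> \<and> y \<in> \<Lambda>} \<inter> {a - b | a b. a \<in> K \<and> b \<in> K})"
proof (cases "\<Lambda> \<inter> (+) s ` K = {}")
  case True then show ?thesis by simp
next
  case False
  then obtain y0 where y0: "y0 \<in> \<Lambda>" "y0 \<in> (+) s ` K" by blast
  let ?D = "{x - y | x y. x \<in> \<Lambda> \<and> y \<in> \<Lambda>} \<inter> {a - b | a b. a \<in> K \<and> b \<in> K}"
  have KK: "{a - b | a b. a \<in> K \<and> b \<in> K} = (\<lambda>p. fst p - snd p) ` (K \<times> K)" by force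
  have "compact ((\<lambda>p. fst p - snd p) ` (K \<times> K))"
    apply (rule compact_continuous_image)
     apply (intro continuous_intros)
    apply (rule compact_Times; fact)
    done
  then have fin: "finite ?D" using assms(1) unfolding FLC_def locally_finite_set_def KK by blast
  have inj: "inj_on (\<lambda>x. x - y0) (\<Lambda> \<inter> (+) s ` K)" by (auto simp: inj_on_def)
  have sub: "(\<lambda>x. x - y0) ` (\<Lambda> \<inter> (+) s ` K) \<subseteq> ?D"
  proof
    fix z assume "z \<in> (\<lambda>x. x - y0) ` (\<Lambda> \<inter> (+) s ` K)"
    then obtain x where x: "x \<in> \<Lambda>" "x \<in> (+) s ` K" "z = x - y0" by blast
    from x(2) obtain k where k: "k \<in> K" "x = s + k" by blast
    from y0(2) obtain k0 where k0: "k0 \<in> K" "y0 = s + k0" by blast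
    have "z = k - k0" using k k0 x(3) by (simp add: algebra_simps)
    then show "z \<in> ?D" using x y0 k k0 by blast
  qed
  have "finite (\<Lambda> \<inter> (+) s ` K)"
    using finite_subset[OF sub fin] inj finite_imageD by blast
  moreover have "card (\<Lambda> \<inter> (+) s ` K) \<le> card ?D"
    using card_inj_on_le[OF inj sub fin] .
  ultimately show ?thesis by blast
qed

lemma ennreal_3sum: "0 \<le> (a::real) \<Longrightarrow> 0 \<le> k \<Longrightarrow> ennreal a + ennreal k + ennreal k = ennreal (a + 2*k)"
proof -
  assume a: "0 \<le> a" and k: "0 \<le> k"
  have "ennreal (a + 2*k) = ennreal (a + (k + k))" by (simp only: mult_2)
  also have "\<dots> = ennreal a + ennreal (k + k)" using a k by (intro ennreal_plus) auto
  also have "ennreal (k + k) = ennreal k + ennreal k" using k by (intro ennreal_plus) auto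
  finally show ?thesis by (simp only: add.assoc)
qed

theorem lemma13p6:
  fixes K :: "'a::{topological_ab_group_add, t2_space} set"
    and w :: "'a \<Rightarrow> complex"
  assumes "locally_compact_space (euclidean :: 'a topology)"
    and "sigma_compact_space TYPE('a)"
    and "compact K" and "interior K \<noteq> {}"
    and "weighted_comb w"
    and "concentrated K w"
    and "sup_norm w < \<infinity>"
  shows "norm_ap K w \<longleftrightarrow> sup_ap w"
proof
  assume na: "norm_ap K w"
  obtain k0 where k0: "k0 \<in> K" using assms(4) interior_subset by blast
  show "sup_ap w" unfolding sup_ap_def
  proof (intro allI impI)
    fix \<epsilon> :: real assume "\<epsilon> > 0"
    then have rd: "rel_dense {t. K_norm K (\<lambda>x. w x - transl t w x) < ennreal \<epsilon>}"
      using na norm_ap_def by blast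
    show "rel_dense {t. (SUP x. ennreal (cmod (w (t + x) - w x))) < ennreal \<epsilon>}"
    proof (rule rel_dense_mono[OF _ rd], safe)
      fix t assume t: "K_norm K (\<lambda>x. w x - transl t w x) < ennreal \<epsilon>"
      have "(SUP x. ennreal (cmod (w (t + x) - w x))) \<le> K_norm K (\<lambda>x. w x - transl t w x)"
      proof (rule SUP_least)
        fix y
        have "t + y \<in> (+) (t + y - k0) ` K" using k0 by (auto intro!: image_eqI[of _ _ k0])
        then have "ennreal (cmod (w (t + y) - transl t w (t + y))) \<le>
             var_mass (\<lambda>x. w x - transl t w x) ((+) (t + y - k0) ` K)"
          by (rule var_mass_single)
        also have "\<dots> \<le> K_norm K (\<lambda>x. w x - transl t w x)" by (rule var_mass_le_K)
        finally show "ennreal (cmod (w (t + y) - w y)) \<le> K_norm K (\<lambda>x. w x - transl t w x)"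
          by (simp add: transl_def)
      qed
      then show "(SUP x. ennreal (cmod (w (t + x) - w x))) < ennreal \<epsilon>" using t by simp
    qed
  qed
next
  assume sa: "sup_ap w"
  show "norm_ap K w" unfolding norm_ap_def
  proof (intro allI impI)
    fix \<epsilon> :: real assume ep: "\<epsilon> > 0"
    obtain \<Lambda> where L: "FLC \<Lambda>" and Lr: "K_norm K (\<lambda>x. w x - comb_restrict w \<Lambda> x) < ennreal (\<epsilon>/3)"
      using assms(6) ep unfolding concentrated_def by (meson divide_pos_pos zero_less_numeral)
    define r where "r = (\<lambda>x. w x - comb_restrict w \<Lambda> x)"
    have Lr': "K_norm K r < ennreal (\<epsilon>/3)" using Lr unfolding r_def .
    define k where "k = enn2real (K_norm K r)"
    have fin: "K_norm K r < top" using Lr' by (rule order.strict_trans) simp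
    have k1: "K_norm K r = ennreal k" unfolding k_def using fin by simp
    have k2: "k \<ge> 0" unfolding k_def by simp
    have "ennreal k < ennreal (\<epsilon>/3)" using Lr' k1 by simp
    then have k3: "k < \<epsilon>/3" using k2 ennreal_less_iff by blast
    note kdef = k1 k2 k3
    define N where "N = card ({x - y | x y. x \<in> \<Lambda> \<and> y \<in> \<Lambda>} \<inter> {a - b | a b. a \<in> K \<and> b \<in> K})"
    have CB: "\<And>s. finite (\<Lambda> \<inter> (+) s ` K) \<and> card (\<Lambda> \<inter> (+) s ` K) \<le> N"
      using card_bound[OF L assms(3)] unfolding N_def by blast
    define \<delta> where "\<delta> = \<epsilon> / (3 * (2 * real N + 1))"
    have dpos: "\<delta> > 0" using ep by (simp add: \<delta>_def)
    have d2N: "2 * real N * \<delta> < \<epsilon> / 3"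
    proof -
      have "2 * real N * \<delta> = (\<epsilon>/3) * (2 * real N / (2 * real N + 1))"
        by (simp add: \<delta>_def field_simps)
      also have "\<dots> < (\<epsilon>/3) * 1" using ep by (intro mult_strict_left_mono) auto
      finally show ?thesis by simp
    qed
    have rd: "rel_dense {t. (SUP x. ennreal (cmod (w (t + x) - w x))) < ennreal \<delta>}"
      using sa dpos unfolding sup_ap_def by blast
    show "rel_dense {t. K_norm K (\<lambda>x. w x - transl t w x) < ennreal \<epsilon>}"
    proof (rule rel_dense_mono[OF _ rd], safe)
      fix t assume t: "(SUP x. ennreal (cmod (w (t + x) - w x))) < ennreal \<delta>"
      have pt: "cmod (w x - w (x - t)) < \<delta>" for x
      proof -
        have "ennreal (cmod (w (t + (x - t)) - w (x - t))) \<le> (SUP x. ennreal (cmod (w (t + x) - w x)))"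
          by (rule SUP_upper) simp
        then have "ennreal (cmod (w x - w (x - t))) < ennreal \<delta>" using t by simp
        then show ?thesis by (simp add: ennreal_less_iff)
      qed
      have bnd: "var_mass (\<lambda>x. w x - transl t w x) ((+) s ` K) \<le> ennreal (2 * real N * \<delta> + 2 * k)" for s
      proof -
        define A where "A = (+) s ` K"
        define P where "P = A \<inter> (\<Lambda> \<union> (+) t ` \<Lambda>)"
        have P1: "(+) t ` \<Lambda> \<inter> A = (+) t ` (\<Lambda> \<inter> (+) (s - t) ` K)"
        proof (rule set_eqI, rule iffI)
          fix x assume "x \<in> (+) t ` \<Lambda> \<inter> A"
          then obtain l c where l: "l \<in> \<Lambda>" "x = t + l" and c: "c \<in> K" "x = s + c"
            unfolding A_def by blast
          have "l = (s - t) + c" using l(2) c(2) by (simp add: algebra_simps)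
          then have "l \<in> (+) (s - t) ` K" using c(1) by blast
          then show "x \<in> (+) t ` (\<Lambda> \<inter> (+) (s - t) ` K)" using l by blast
        next
          fix x assume "x \<in> (+) t ` (\<Lambda> \<inter> (+) (s - t) ` K)"
          then obtain l c where l: "l \<in> \<Lambda>" "x = t + l" and c: "c \<in> K" "l = (s - t) + c"
            by blast
          have "x = s + c" using l(2) c(2) by (simp add: algebra_simps)
          then show "x \<in> (+) t ` \<Lambda> \<inter> A" unfolding A_def using l c(1) by blast
        qed
        have finP: "finite P" and cardP: "card P \<le> 2 * N"
        proof -
          have e: "P = (\<Lambda> \<inter> A) \<union> ((+) t ` \<Lambda> \<inter> A)" unfolding P_def by blast
          have f1: "finite (\<Lambda> \<inter> A)" "card (\<Lambda> \<inter> A) \<le> N" using CB[of s] A_def by auto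
          have f2: "finite ((+) t ` \<Lambda> \<inter> A)" "card ((+) t ` \<Lambda> \<inter> A) \<le> N"
            unfolding P1 using CB[of "s - t"] card_image_le le_trans by blast+
          show "finite P" using e f1 f2 by simp
          have "card P \<le> card (\<Lambda> \<inter> A) + card ((+) t ` \<Lambda> \<inter> A)" unfolding e by (rule card_Un_le)
          then show "card P \<le> 2 * N" using f1 f2 by linarith
        qed
        have pw: "ennreal (cmod (w x - transl t w x)) \<le>
             (if x \<in> P then ennreal \<delta> else 0) + ennreal (cmod (r x)) + ennreal (cmod (r (x - t)))"
          if "x \<in> A" for x
        proof (cases "x \<in> P")
          case True
          then show ?thesis using pt[of x] by (simp add: transl_def add_increasing2 ennreal_leI order_less_imp_le)
        next
          case False
          then have "x \<notin> \<Lambda>" "x - t \<notin> \<Lambda>" using that unfolding P_def by (auto simp: image_iff)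
          then have "r x = w x" "r (x - t) = w (x - t)" by (auto simp: r_def comb_restrict_def)
          then have "cmod (w x - transl t w x) \<le> cmod (r x) + cmod (r (x - t))"
            by (simp add: transl_def norm_triangle_ineq4)
          then have "ennreal (cmod (w x - transl t w x)) \<le> ennreal (cmod (r x) + cmod (r (x - t)))"
            by (rule ennreal_leI)
          then show ?thesis using False by simp
        qed
        have "var_mass (\<lambda>x. w x - transl t w x) A \<le>
           infsum (\<lambda>x. (if x \<in> P then ennreal \<delta> else 0) + ennreal (cmod (r x)) + ennreal (cmod (r (x - t)))) A"
          unfolding var_mass_def by (rule infsum_mono[OF ennreal_summ ennreal_summ]) (use pw in auto)
        also have "\<dots> = infsum (\<lambda>x. if x \<in> P then ennreal \<delta> else 0) A + infsum (\<lambda>x. ennreal (cmod (r x))) A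
              + infsum (\<lambda>x. ennreal (cmod (r (x - t)))) A"
          by (simp add: infsum_add ennreal_summ)
        also have "infsum (\<lambda>x. if x \<in> P then ennreal \<delta> else 0) A = infsum (\<lambda>x. ennreal \<delta>) P"
          by (rule infsum_cong_neutral) (auto simp: P_def)
        also have "\<dots> = of_nat (card P) * ennreal \<delta>" using finP by simp
        also have "\<dots> \<le> ennreal (2 * real N * \<delta>)"
        proof -
          have "of_nat (card P) * ennreal \<delta> = ennreal (real (card P) * \<delta>)"
            using dpos by (simp add: ennreal_mult ennreal_of_nat_eq_real_of_nat)
          also have "\<dots> \<le> ennreal (2 * real N * \<delta>)"
            using cardP dpos by (intro ennreal_leI mult_right_mono) auto
          finally show ?thesis .
        qed
        also have "infsum (\<lambda>x. ennreal (cmod (r x))) A \<le> ennreal k"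
          using var_mass_le_K[of r s K] kdef unfolding var_mass_def A_def by simp
        also have "infsum (\<lambda>x. ennreal (cmod (r (x - t)))) A = var_mass r ((+) (s - t) ` K)"
        proof -
          have im: "(+) (s - t) ` K = (\<lambda>x. x - t) ` A"
            unfolding A_def by (auto simp: image_iff algebra_simps)
          have "inj_on (\<lambda>x. x - t) A" by (auto simp: inj_on_def)
          then show ?thesis unfolding var_mass_def im by (simp add: infsum_reindex comp_def)
        qed
        also have "\<dots> \<le> ennreal k" using var_mass_le_K[of r "s - t" K] kdef by simp
        finally have "var_mass (\<lambda>x. w x - transl t w x) A \<le> ennreal (2 * real N * \<delta>) + ennreal k + ennreal k"
          by (simp add: add_mono)
        also have "\<dots> = ennreal (2 * real N * \<delta> + 2 * k)"
          using kdef dpos by (intro ennreal_3sum) auto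
        finally show ?thesis unfolding A_def .
      qed
      have "K_norm K (\<lambda>x. w x - transl t w x) \<le> ennreal (2 * real N * \<delta> + 2 * k)"
        unfolding K_norm_def by (rule SUP_least) (rule bnd)
      also have "\<dots> < ennreal \<epsilon>"
        using d2N kdef dpos ep by (intro ennreal_lessI) auto
      finally show "K_norm K (\<lambda>x. w x - transl t w x) < ennreal \<epsilon>" .
    qed
  qed
qed

end
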